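(* Let $K$ be a field with $\operatorname{char}(K)\neq2$, and let $(C_1,C_0,s,t,e,k)$ be a categorical Lie $K$-algebra (so $C_1,C_0$ are Lie $K$-algebras) and $\tau\colon C_0\times C_0\to C_1$ a $K$-bilinear map. Define $\tau^-\colon C_0\times C_0\to C_1$ by $\tau^-_{a,b}=-\tau_{b,a}$. Then $(C_1,C_0,s,t,e,k,\tau)$ is a braided categorical Lie $K$-algebra if and only if $(C_1,C_0,s,t,e,k,(\tau,\tau^-))$ is a braided categorical Leibniz $K$-algebra.
   Context: A Leibniz $K$-algebra: bilinear bracket with $[x,[y,z]]=[[x,y],z]-[[x,z],y]$; a Lie algebra is an antisymmetric one. A categorical Lie (resp. Leibniz) algebra $(C_1,C_0,s,t,e,k)$ is an internal category in Lie (resp. Leibniz) algebras: homomorphisms $s,t\colon C_1\to C_0$, $e\colon C_0\to C_1$, $k\colon\{(x,y)\in C_1\times C_1:t(x)=s(y)\}\to C_1$ with $se=te=\mathrm{Id}$, $sk(x,y)=s(x)$, $tk(x,y)=t(y)$, $k(es(x),x)=x=k(x,et(x))$, $k$ associative ($k(x,y)$ is the composite "$x$ then $y$"). A braiding on a categorical Lie algebra is a bilinear $\tau\colon C_0\times C_0\to C_1$ with, for $a,b,c\in C_0$, $x,y\in C_1$: $s(\tau_{a,b})=[a,b]$, $t(\tau_{a,b})=[b,a]$; $k([x,y],\tau_{t(x),t(y)})=k(\tau_{s(x),s(y)},[y,x])$; $\tau_{[a,b],c}=\tau_{a,[b,c]}-\tau_{b,[a,c]}$; $\tau_{a,[b,c]}=\tau_{[a,b],c}-\tau_{[a,c],b}$.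 A braiding on a categorical Leibniz algebra is a pair of bilinear $\tau,\psi\colon C_0\times C_0\to C_1$ with $s(\tau_{a,b})=s(\psi_{a,b})=[a,b]$, $t(\tau_{a,b})=t(\psi_{a,b})=-[a,b]$; $k([x,y],\tau_{t(x),t(y)})=k(\tau_{s(x),s(y)},-[x,y])$ and likewise for $\psi$; $\tau_{a,[b,c]}=\tau_{[a,b],c}-\tau_{[a,c],b}$; $\psi_{a,[b,c]}=\tau_{[a,b],c}-\psi_{[a,c],b}$; $\tau_{a,[b,c]}=\tau_{[a,b],c}-\psi_{[a,c],b}$; $\psi_{a,[b,c]}=\psi_{[a,b],c}-\psi_{[a,c],b}$. *)

theory Defs
  imports Main "HOL.Vector_Spaces"
begin

definition bilinear_map ::
  "('k::field \<Rightarrow> 'a::ab_group_add \<Rightarrow> 'a) \<Rightarrow> ('k \<Rightarrow> 'b::ab_group_add \<Rightarrow> 'b)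
   \<Rightarrow> ('k \<Rightarrow> 'c::ab_group_add \<Rightarrow> 'c) \<Rightarrow> ('a \<Rightarrow> 'b \<Rightarrow> 'c) \<Rightarrow> bool" where
  "bilinear_map sa sb sc f \<longleftrightarrow>
     (\<forall>x x' y. f (x + x') y = f x y + f x' y) \<and>
     (\<forall>x y y'. f x (y + y') = f x y + f x y') \<and>
     (\<forall>c x y. f (sa c x) y = sc c (f x y)) \<and>
     (\<forall>c x y. f x (sb c y) = sc c (f x y))"

definition leibniz_algebra :: "('k::field \<Rightarrow> 'a::ab_group_add \<Rightarrow> 'a) \<Rightarrow> ('a \<Rightarrow> 'a \<Rightarrow> 'a) \<Rightarrow> bool" where
  "leibniz_algebra sc br \<longleftrightarrow> Vector_Spaces.vector_space sc \<and> bilinear_map sc sc sc br \<and>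
     (\<forall>x y z. br x (br y z) = br (br x y) z - br (br x z) y)"

definition lie_algebra :: "('k::field \<Rightarrow> 'a::ab_group_add \<Rightarrow> 'a) \<Rightarrow> ('a \<Rightarrow> 'a \<Rightarrow> 'a) \<Rightarrow> bool" where
  "lie_algebra sc br \<longleftrightarrow> leibniz_algebra sc br \<and> (\<forall>x y. br x y = - br y x)"

definition alg_hom ::
  "('k::field \<Rightarrow> 'a::ab_group_add \<Rightarrow> 'a) \<Rightarrow> ('a \<Rightarrow> 'a \<Rightarrow> 'a)
   \<Rightarrow> ('k \<Rightarrow> 'b::ab_group_add \<Rightarrow> 'b) \<Rightarrow> ('b \<Rightarrow> 'b \<Rightarrow> 'b) \<Rightarrow> ('a \<Rightarrow> 'b) \<Rightarrow> bool" where
  "alg_hom sa bra sb brb f \<longleftrightarrow> Vector_Spaces.linear sa sb f \<and> (\<forall>x y. f (bra x y) = brb (f x) (f y))"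

text \<open>The composition k is only meaningful on
 the pullback {(x,y). t x = s y}; it is represented by a total function and all conditions on k
 are imposed only on composable pairs. k x y is the composite "x then y".\<close>
definition cat_axioms ::
  "('k::field \<Rightarrow> 'c1::ab_group_add \<Rightarrow> 'c1) \<Rightarrow> ('c1 \<Rightarrow> 'c1 \<Rightarrow> 'c1)
   \<Rightarrow> ('k \<Rightarrow> 'c0::ab_group_add \<Rightarrow> 'c0) \<Rightarrow> ('c0 \<Rightarrow> 'c0 \<Rightarrow> 'c0)
   \<Rightarrow> ('c1 \<Rightarrow> 'c0) \<Rightarrow> ('c1 \<Rightarrow> 'c0) \<Rightarrow> ('c0 \<Rightarrow> 'c1) \<Rightarrow> ('c1 \<Rightarrow> 'c1 \<Rightarrow> 'c1) \<Rightarrow> bool" where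
  "cat_axioms sc1 br1 sc0 br0 s t e k \<longleftrightarrow>
     alg_hom sc1 br1 sc0 br0 s \<and> alg_hom sc1 br1 sc0 br0 t \<and> alg_hom sc0 br0 sc1 br1 e \<and>
     \<comment> \<open>k is a homomorphism on the pullback algebra\<close>
     (\<forall>x y x' y'. t x = s y \<longrightarrow> t x' = s y' \<longrightarrow> k (x + x') (y + y') = k x y + k x' y') \<and>
     (\<forall>c x y. t x = s y \<longrightarrow> k (sc1 c x) (sc1 c y) = sc1 c (k x y)) \<and>
     (\<forall>x y x' y'. t x = s y \<longrightarrow> t x' = s y' \<longrightarrow> k (br1 x x') (br1 y y') = br1 (k x y) (k x' y')) \<and>
     (\<forall>a. s (e a) = a) \<and> (\<forall>a. t (e a) = a) \<and>
     (\<forall>x y. t x = s y \<longrightarrow> s (k x y) = s x) \<and>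
     (\<forall>x y. t x = s y \<longrightarrow> t (k x y) = t y) \<and>
     (\<forall>x. k (e (s x)) x = x) \<and> (\<forall>x. k x (e (t x)) = x) \<and>
     (\<forall>x y z. t x = s y \<longrightarrow> t y = s z \<longrightarrow> k (k x y) z = k x (k y z))"

definition cat_lie_algebra where
  "cat_lie_algebra sc1 br1 sc0 br0 s t e k \<longleftrightarrow>
     lie_algebra sc1 br1 \<and> lie_algebra sc0 br0 \<and> cat_axioms sc1 br1 sc0 br0 s t e k"

definition cat_leibniz_algebra where
  "cat_leibniz_algebra sc1 br1 sc0 br0 s t e k \<longleftrightarrow>
     leibniz_algebra sc1 br1 \<and> leibniz_algebra sc0 br0 \<and> cat_axioms sc1 br1 sc0 br0 s t e k"

definition braided_cat_lie_algebra where
  "braided_cat_lie_algebra sc1 br1 sc0 br0 s t e k \<tau> \<longleftrightarrow>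
     cat_lie_algebra sc1 br1 sc0 br0 s t e k \<and> bilinear_map sc0 sc0 sc1 \<tau> \<and>
     (\<forall>a b. s (\<tau> a b) = br0 a b) \<and> (\<forall>a b. t (\<tau> a b) = br0 b a) \<and>
     (\<forall>x y. k (br1 x y) (\<tau> (t x) (t y)) = k (\<tau> (s x) (s y)) (br1 y x)) \<and>
     (\<forall>a b c. \<tau> (br0 a b) c = \<tau> a (br0 b c) - \<tau> b (br0 a c)) \<and>
     (\<forall>a b c. \<tau> a (br0 b c) = \<tau> (br0 a b) c - \<tau> (br0 a c) b)"

definition braided_cat_leibniz_algebra where
  "braided_cat_leibniz_algebra sc1 br1 sc0 br0 s t e k \<tau> \<psi> \<longleftrightarrow>
     cat_leibniz_algebra sc1 br1 sc0 br0 s t e k \<and>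
     bilinear_map sc0 sc0 sc1 \<tau> \<and> bilinear_map sc0 sc0 sc1 \<psi> \<and>
     (\<forall>a b. s (\<tau> a b) = br0 a b) \<and> (\<forall>a b. s (\<psi> a b) = br0 a b) \<and>
     (\<forall>a b. t (\<tau> a b) = - br0 a b) \<and> (\<forall>a b. t (\<psi> a b) = - br0 a b) \<and>
     (\<forall>x y. k (br1 x y) (\<tau> (t x) (t y)) = k (\<tau> (s x) (s y)) (- br1 x y)) \<and>
     (\<forall>x y. k (br1 x y) (\<psi> (t x) (t y)) = k (\<psi> (s x) (s y)) (- br1 x y)) \<and>
     (\<forall>a b c. \<tau> a (br0 b c) = \<tau> (br0 a b) c - \<tau> (br0 a c) b) \<and>
     (\<forall>a b c. \<psi> a (br0 b c) = \<tau> (br0 a b) c - \<psi> (br0 a c) b) \<and>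
     (\<forall>a b c. \<tau> a (br0 b c) = \<tau> (br0 a b) c - \<psi> (br0 a c) b) \<and>
     (\<forall>a b c. \<psi> a (br0 b c) = \<psi> (br0 a b) c - \<psi> (br0 a c) b)"

end

theory Submission
  imports Defs
begin

lemma lin_neg: "Vector_Spaces.linear s1 s2 f \<Longrightarrow> f (- x) = - f x"
  by (metis module_hom.neg module_hom_iff_linear)

lemma lin_zero: "Vector_Spaces.linear s1 s2 f \<Longrightarrow> f 0 = 0"
  by (metis module_hom.zero module_hom_iff_linear)

lemma vs_neg: "Vector_Spaces.vector_space sc \<Longrightarrow> sc c (- x) = - sc c x"
  by (metis module.scale_minus_right module_iff_vector_space)

lemma k_neg:
  fixes t s :: "'b::ab_group_add \<Rightarrow> 'c" and k :: "'b \<Rightarrow> 'b \<Rightarrow> 'a::ab_group_add"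
  assumes "\<forall>x y x' y'. t x = s y \<longrightarrow> t x' = s y' \<longrightarrow> k (x + x') (y + y') = k x y + k x' y'"
    and "t u = s v" and "t (- u) = s (- v)" and z: "t 0 = s 0"
  shows "k (- u) (- v) = - k u v"
proof -
  have "k 0 0 = k 0 0 + k 0 0" using assms(1) z by (metis add_0)
  hence k0: "k 0 0 = 0" by simp
  have "k (u + - u) (v + - v) = k u v + k (- u) (- v)" using assms by blast
  hence "k u v + k (- u) (- v) = 0" using k0 by simp
  thus ?thesis by (metis add.commute eq_neg_iff_add_eq_0)
qed

lemma grp:
  fixes x w z v :: "'a::ab_group_add"
  assumes "x = w - z" "w = x - v" shows "v = - z"
proof -
  have "x = x - v - z" using assms by metis
  hence "v + z = 0" by (simp add: algebra_simps)
  thus ?thesis by (simp add: eq_neg_iff_add_eq_0)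
qed

theorem mainTheorem6:
  fixes sc1 :: "'k::field \<Rightarrow> 'c1::ab_group_add \<Rightarrow> 'c1" and br1 :: "'c1 \<Rightarrow> 'c1 \<Rightarrow> 'c1"
    and sc0 :: "'k \<Rightarrow> 'c0::ab_group_add \<Rightarrow> 'c0" and br0 :: "'c0 \<Rightarrow> 'c0 \<Rightarrow> 'c0"
    and s t :: "'c1 \<Rightarrow> 'c0" and e :: "'c0 \<Rightarrow> 'c1" and k :: "'c1 \<Rightarrow> 'c1 \<Rightarrow> 'c1"
    and \<tau> :: "'c0 \<Rightarrow> 'c0 \<Rightarrow> 'c1"
  assumes "(2::'k) \<noteq> 0"
    and "cat_lie_algebra sc1 br1 sc0 br0 s t e k"
    and "bilinear_map sc0 sc0 sc1 \<tau>"
  shows "braided_cat_lie_algebra sc1 br1 sc0 br0 s t e k \<tau> \<longleftrightarrow>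
         braided_cat_leibniz_algebra sc1 br1 sc0 br0 s t e k \<tau> (\<lambda>a b. - \<tau> b a)"
proof -
  have L1: "lie_algebra sc1 br1" and L0: "lie_algebra sc0 br0"
    and C: "cat_axioms sc1 br1 sc0 br0 s t e k" using assms(2) by (auto simp: cat_lie_algebra_def)
  have as1: "\<And>x y. br1 x y = - br1 y x" using L1 unfolding lie_algebra_def by blast
  have as0: "\<And>x y. br0 x y = - br0 y x" using L0 unfolding lie_algebra_def by blast
  have vs1: "Vector_Spaces.vector_space sc1" using L1 unfolding lie_algebra_def leibniz_algebra_def by blast
  have hs: "alg_hom sc1 br1 sc0 br0 s" and ht: "alg_hom sc1 br1 sc0 br0 t"
    using C by (auto simp: cat_axioms_def)
  have sneg: "\<And>x. s (- x) = - s x" using hs lin_neg by (auto simp: alg_hom_def)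
  have tneg: "\<And>x. t (- x) = - t x" using ht lin_neg by (auto simp: alg_hom_def)
  have s0: "s 0 = 0" using hs lin_zero by (auto simp: alg_hom_def)
  have t0: "t 0 = 0" using ht lin_zero by (auto simp: alg_hom_def)
  have sbr: "\<And>x y. s (br1 x y) = br0 (s x) (s y)" using hs by (auto simp: alg_hom_def)
  have tbr: "\<And>x y. t (br1 x y) = br0 (t x) (t y)" using ht by (auto simp: alg_hom_def)
  have kadd: "\<forall>x y x' y'. t x = s y \<longrightarrow> t x' = s y' \<longrightarrow> k (x + x') (y + y') = k x y + k x' y'"
    using C by (auto simp: cat_axioms_def)
  have CL: "cat_leibniz_algebra sc1 br1 sc0 br0 s t e k"
    using L1 L0 C unfolding cat_leibniz_algebra_def lie_algebra_def by blast
  have bil: "bilinear_map sc0 sc0 sc1 (\<lambda>a b. - \<tau> b a)"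
    using assms(3) vs_neg[OF vs1] by (auto simp: bilinear_map_def)
  show ?thesis
  proof
    assume B: "braided_cat_lie_algebra sc1 br1 sc0 br0 s t e k \<tau>"
    note Bu = B[unfolded braided_cat_lie_algebra_def]
    note s\<tau> = Bu[THEN conjunct2, THEN conjunct2, THEN conjunct1, rule_format]
    note t\<tau> = Bu[THEN conjunct2, THEN conjunct2, THEN conjunct2, THEN conjunct1, rule_format]
    note kc = Bu[THEN conjunct2, THEN conjunct2, THEN conjunct2, THEN conjunct2, THEN conjunct1, rule_format]
    note c1 = Bu[THEN conjunct2, THEN conjunct2, THEN conjunct2, THEN conjunct2, THEN conjunct2, THEN conjunct1, rule_format]
    note c2 = Bu[THEN conjunct2, THEN conjunct2, THEN conjunct2, THEN conjunct2, THEN conjunct2, THEN conjunct2, rule_format]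
    have sym: "\<And>a c b. \<tau> (br0 a c) b = - \<tau> b (br0 a c)"
    proof -
      fix a b c
      show "\<tau> (br0 a c) b = - \<tau> b (br0 a c)" by (rule grp[OF c1[of a b c] c2[of a b c]])
    qed
    have kc2: "\<And>x y. k (br1 x y) (- \<tau> (t y) (t x)) = k (- \<tau> (s y) (s x)) (- br1 x y)"
    proof -
      fix x y
      have "k (- br1 y x) (- \<tau> (t y) (t x)) = - k (br1 y x) (\<tau> (t y) (t x))"
        by (rule k_neg[OF kadd]) (simp_all add: tbr s\<tau> tneg sneg s0 t0)
      also have "\<dots> = - k (\<tau> (s y) (s x)) (br1 x y)" using kc by simp
      also have "\<dots> = k (- \<tau> (s y) (s x)) (- br1 x y)"
        by (rule k_neg[OF kadd, symmetric]) (simp_all add: t\<tau> sbr tneg sneg s0 t0)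
      finally show "k (br1 x y) (- \<tau> (t y) (t x)) = k (- \<tau> (s y) (s x)) (- br1 x y)"
        using as1[of x y] by simp
    qed
    have t1: "t (\<tau> a b) = - br0 a b" for a b using t\<tau>[of a b] as0[of b a] by simp
    have t3: "t (- \<tau> b a) = - br0 a b" for a b using t\<tau>[of b a] tneg by simp
    have s3: "s (- \<tau> b a) = br0 a b" for a b using s\<tau>[of b a] sneg as0[of a b] by simp
    have kc1: "k (br1 x y) (\<tau> (t x) (t y)) = k (\<tau> (s x) (s y)) (- br1 x y)" for x y
      using kc[of x y] as1[of y x] by simp
    have d1: "- \<tau> (br0 b c) a = \<tau> (br0 a b) c - - \<tau> b (br0 a c)" for a b c
      using sym[of b c a] c2[of a b c] sym[of a c b] by simp
    have d2: "\<tau> a (br0 b c) = \<tau> (br0 a b) c - - \<tau> b (br0 a c)" for a b c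
      using c2[of a b c] sym[of a c b] by simp
    have d3: "- \<tau> (br0 b c) a = - \<tau> c (br0 a b) - - \<tau> b (br0 a c)" for a b c
      using sym[of b c a] c2[of a b c] sym[of a b c] sym[of a c b] by simp
    show "braided_cat_leibniz_algebra sc1 br1 sc0 br0 s t e k \<tau> (\<lambda>a b. - \<tau> b a)"
      unfolding braided_cat_leibniz_algebra_def
      using CL assms(3) bil s\<tau> s3 t1 t3 kc1 kc2 c2 d1 d2 d3 by (intro conjI allI) (assumption | fact)+
  next
    assume B: "braided_cat_leibniz_algebra sc1 br1 sc0 br0 s t e k \<tau> (\<lambda>a b. - \<tau> b a)"
    note Bu = B[unfolded braided_cat_leibniz_algebra_def]
    note s\<tau> = Bu[THEN conjunct2, THEN conjunct2, THEN conjunct2, THEN conjunct1, rule_format]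
    note t\<tau> = Bu[THEN conjunct2, THEN conjunct2, THEN conjunct2, THEN conjunct2, THEN conjunct2, THEN conjunct1, rule_format]
    note kc = Bu[THEN conjunct2, THEN conjunct2, THEN conjunct2, THEN conjunct2, THEN conjunct2, THEN conjunct2, THEN conjunct2, THEN conjunct1, rule_format]
    note c2 = Bu[THEN conjunct2, THEN conjunct2, THEN conjunct2, THEN conjunct2, THEN conjunct2, THEN conjunct2, THEN conjunct2, THEN conjunct2, THEN conjunct2, THEN conjunct1, rule_format]
    note c3' = Bu[THEN conjunct2, THEN conjunct2, THEN conjunct2, THEN conjunct2, THEN conjunct2, THEN conjunct2, THEN conjunct2, THEN conjunct2, THEN conjunct2, THEN conjunct2, THEN conjunct2, THEN conjunct1, rule_format]
    have c3: "\<tau> a (br0 b c) = \<tau> (br0 a b) c + \<tau> b (br0 a c)" for a b c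
      using c3'[of a b c] by simp
    have t2: "t (\<tau> a b) = br0 b a" for a b using t\<tau>[of a b] as0[of b a] by simp
    have kc': "k (br1 x y) (\<tau> (t x) (t y)) = k (\<tau> (s x) (s y)) (br1 y x)" for x y
      using kc[of x y] as1[of y x] by simp
    have c1: "\<And>a b c. \<tau> (br0 a b) c = \<tau> a (br0 b c) - \<tau> b (br0 a c)"
      using c3 by (metis add_diff_cancel)
    show "braided_cat_lie_algebra sc1 br1 sc0 br0 s t e k \<tau>"
      unfolding braided_cat_lie_algebra_def
      using assms(2,3) s\<tau> t2 kc' c1 c2 by (intro conjI allI) (assumption | fact)+
  qed
qed

end
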